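(* Let $T$ be a positive random variable with characteristic function $\Phi(\omega)=\mathbb E[e^{i\omega T}]$, and let $\Delta>0$. Then $$\sup_{|\omega|\ge\Delta}|\Phi(\omega)|\ \ge\ e^{-\Delta\langle T\rangle\pi/2}.$$
   Context: $\langle T\rangle=\mathbb E[T]$ (if infinite, the bound is trivial). *)

theory Defs
  imports "HOL-Probability.Probability"
begin

end

theory Submission
  imports Defs "HOL-Complex_Analysis.Complex_Analysis"
begin


lemma exp_quad:
  fixes z :: complex
  assumes "norm z \<le> 1 / 2"
  shows "norm (exp z - 1 - z) \<le> norm z ^ 2"
proof (cases "z = 0")
  case False
  have sums: "(\<lambda>k. z ^ (k + 2) /\<^sub>R fact (k + 2)) sums (exp z - (\<Sum>k<2. z ^ k /\<^sub>R fact k))"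
    by (intro sums_split_initial_segment exp_converges)
  have "summable (\<lambda>k. norm z ^ (k + 2) /\<^sub>R fact (k + 2))"
    using summable_norm_exp[of z]
    by (intro summable_norm summable_ignore_initial_segment)
       (auto simp: norm_power norm_divide divide_simps)
  also have "?this \<longleftrightarrow> summable (\<lambda>k. norm z ^ 2 * (norm z ^ k / fact (k +2)))"
    by (simp add: power_add mult_ac divide_simps power2_eq_square del: of_nat_Suc of_nat_add)
  also have "\<dots> \<longleftrightarrow> summable (\<lambda>k. norm z ^ k / fact (k + 2))"
    by (subst summable_cmult_iff) (use \<open>z \<noteq> 0\<close> in auto)
  finally have summable: "summable (\<lambda>k. norm z ^ k / fact (k + 2))" .
  have "exp z - 1 - z = (\<Sum>k. z ^ (k + 2) / fact (k + 2))"
    using sums by (simp add: sums_iff scaleR_conv_of_real divide_simps eval_nat_numeral)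
  also have "norm \<dots> \<le> (\<Sum>k. norm (z ^ (k + 2) / fact (k + 2)))"
    using summable_norm_exp[of z]
    by (intro summable_norm summable_ignore_initial_segment)
       (auto simp: norm_power norm_divide divide_simps)
  also have "\<dots> = (\<Sum>k. norm z ^ 2 * (norm z ^ k / fact (k + 2)))"
    by (simp add: power_add norm_power norm_divide mult_ac norm_mult power2_eq_square del: of_nat_Suc)
  also have "\<dots> = norm z ^ 2 * (\<Sum>k. norm z ^ k / fact (k + 2))"
    using summable by (rule suminf_mult)
  also have "\<dots> \<le> norm z ^ 2 * (1 / (1 - norm z) / 2)"
  proof (intro mult_left_mono, rule sums_le)
    show "(\<lambda>k. norm z ^ k / fact (k + 2)) sums (\<Sum>k. norm z ^ k / fact (k + 2))"
      using summable by blast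
    show "(\<lambda>k. norm z ^ k / 2) sums (1 / (1 - norm z) / 2)"
      using assms by (intro geometric_sums sums_divide) auto
  next
    fix k :: nat
    have "norm z ^ k / fact (k + 2) \<le> norm z ^ k / fact 2"
      by (intro divide_left_mono fact_mono) auto
    thus "norm z ^ k / fact (k + 2) \<le> norm z ^ k / 2"
      by simp
  qed (auto simp: divide_simps)
  also have "\<dots> \<le> norm z ^ 2 * 1"
    using assms by (intro mult_left_mono) (auto simp: field_simps)
  finally show ?thesis by simp
qed auto

lemma exp_quad12:
  fixes w :: complex
  shows "norm (exp w - 1 - w) \<le> 12 * (norm w)^2 * exp (norm w)"
proof (cases "norm w \<le> 1/2")
  case True
  have "norm (exp w - 1 - w) \<le> norm w ^ 2" by (rule exp_quad[OF True])
  also have "\<dots> \<le> 12 * (norm w)^2 * exp (norm w)"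
    using exp_ge_add_one_self[of "norm w"] by (simp add: mult_le_cancel_right1 order_trans[OF _ mult_right_mono])
     (smt (verit, ccfv_SIG) mult_le_cancel_left1 norm_ge_zero one_le_exp_iff zero_le_power2)
  finally show ?thesis .
next
  case False
  have "norm (exp w - 1 - w) \<le> norm (exp w) + 1 + norm w"
    by (smt (verit) norm_triangle_ineq4 norm_one)
  also have "\<dots> \<le> 3 * exp (norm w)"
  proof -
    have "norm (exp w) \<le> exp (norm w)" by (rule norm_exp)
    moreover have "1 + norm w \<le> exp (norm w)" by (rule exp_ge_add_one_self)
    moreover have "1 \<le> exp (norm w)" by simp
    ultimately show ?thesis by linarith
  qed
  also have "\<dots> \<le> 12 * (norm w)^2 * exp (norm w)"
  proof -
    have "1/2 * (1/2) \<le> norm w * norm w" using False by (intro mult_mono) auto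
    then have "1/4 \<le> (norm w)^2" by (simp add: power2_eq_square)
    then show ?thesis by simp
  qed
  finally show ?thesis .
qed

definition FT :: "'a measure \<Rightarrow> ('a \<Rightarrow> real) \<Rightarrow> complex \<Rightarrow> complex" where
  "FT M T z = (CLINT x|M. exp (\<i> * z * complex_of_real (T x)))"

lemma norm_exp_izt: "norm (exp (\<i> * z * complex_of_real t)) = exp (- Im z * t)"
  by simp

lemma exp_izt_le1:
  assumes "Im z \<ge> 0" "t \<ge> 0"
  shows "norm (exp (\<i> * z * complex_of_real t)) \<le> 1"
  using assms by (simp add: mult_nonneg_nonneg)

lemma meas_exp_izt:
  assumes "T \<in> borel_measurable M"
  shows "(\<lambda>x. exp (\<i> * z * complex_of_real (T x))) \<in> borel_measurable M"
  using assms by measurable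

locale FTsetup = prob_space M for M :: "'a measure" +
  fixes T :: "'a \<Rightarrow> real"
  assumes Tm: "T \<in> borel_measurable M"
    and Tpos: "\<And>x. x \<in> space M \<Longrightarrow> T x > 0"
begin

lemma AE_le1:
  assumes "Im z \<ge> 0"
  shows "AE x in M. norm (exp (\<i> * z * complex_of_real (T x))) \<le> 1"
proof (rule AE_I2)
  fix x assume "x \<in> space M"
  then show "norm (exp (\<i> * z * complex_of_real (T x))) \<le> 1"
    using exp_izt_le1[OF assms, of "T x"] Tpos[of x] by linarith
qed

lemma integrable_exp_izt:
  assumes "Im z \<ge> 0"
  shows "integrable M (\<lambda>x. exp (\<i> * z * complex_of_real (T x)))"
  by (rule integrable_const_bound[where B=1, OF AE_le1[OF assms] meas_exp_izt[OF Tm]])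

lemma FT_le1:
  assumes "Im z \<ge> 0"
  shows "norm (FT M T z) \<le> 1"
proof -
  have "norm (FT M T z) \<le> (\<integral>x. norm (exp (\<i> * z * complex_of_real (T x))) \<partial>M)"
    unfolding FT_def by (rule integral_norm_bound)
  also have "\<dots> \<le> (\<integral>x. 1 \<partial>M)"
    by (rule integral_mono_AE[OF integrable_norm[OF integrable_exp_izt[OF assms]] _ AE_le1[OF assms]]) simp
  also have "\<dots> = 1" by (simp add: prob_space)
  finally show ?thesis .
qed

lemma FT_cont: "continuous_on {z. Im z \<ge> 0} (FT M T)"
  unfolding continuous_on_sequentially
proof safe
  fix X :: "nat \<Rightarrow> complex" and a
  assume X: "\<forall>n. X n \<in> {z. Im z \<ge> 0}" "X \<longlonglongrightarrow> a" and a: "0 \<le> Im a"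
  show "(FT M T \<circ> X) \<longlonglongrightarrow> FT M T a"
    unfolding comp_def FT_def
  proof (rule integral_dominated_convergence[where w="\<lambda>_. 1"])
    show "AE x in M. (\<lambda>i. exp (\<i> * X i * complex_of_real (T x))) \<longlonglongrightarrow> exp (\<i> * a * complex_of_real (T x))"
      using X by (auto intro!: tendsto_intros)
    show "\<And>i. AE x in M. norm (exp (\<i> * X i * complex_of_real (T x))) \<le> 1"
      using X by (intro AE_le1) auto
  qed (auto intro!: meas_exp_izt Tm)
qed

lemma t_exp_bound:
  fixes y t :: real
  assumes "y > 0" "t \<ge> 0"
  shows "t * exp (- y * t) \<le> 1 / y"
proof -
  have "y * t \<le> exp (y * t)" using exp_ge_add_one_self[of "y*t"] by linarith
  then have "t \<le> exp (y * t) / y" using assms by (simp add: field_simps)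
  then show ?thesis using assms by (simp add: exp_minus field_simps)
qed

lemma t2_exp_bound:
  fixes y t :: real
  assumes "y > 0" "t \<ge> 0"
  shows "t^2 * exp (- y * t / 2) \<le> 8 / y^2"
proof -
  have "1 + (y*t/2) + (y*t/2)^2/2 \<le> exp (y*t/2)"
    by (rule exp_lower_Taylor_quadratic) (use assms in simp)
  moreover have "0 \<le> y*t/2" using assms by simp
  ultimately have "y^2 * t^2 / 8 \<le> exp (y*t/2)" by (simp add: power_mult_distrib power_divide)
  then have "t^2 \<le> 8 / y^2 * exp (y*t/2)" using assms by (simp add: field_simps)
  then have "t^2 * exp (- y * t / 2) \<le> 8 / y^2 * exp (y*t/2) * exp (- y * t / 2)"
    by (intro mult_right_mono) auto
  also have "\<dots> = 8 / y^2" by (simp add: mult.assoc flip: exp_add)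
  finally show ?thesis .
qed

lemma pointwise_quad:
  assumes y: "Im z > 0" and t: "t \<ge> 0" and h: "norm h \<le> Im z / 2"
  shows "norm (exp (\<i> * (z + h) * complex_of_real t) - exp (\<i> * z * complex_of_real t)
           - h * (\<i> * complex_of_real t * exp (\<i> * z * complex_of_real t))) \<le> 96 / (Im z)^2 * (norm h)^2"
proof -
  define w where "w = \<i> * h * complex_of_real t"
  have nw: "norm w = norm h * t" using t by (simp add: w_def norm_mult)
  have "exp (\<i> * (z + h) * complex_of_real t) = exp (\<i> * z * complex_of_real t) * exp w"
    unfolding w_def by (simp add: distrib_left distrib_right flip: exp_add)
  then have eq: "exp (\<i> * (z + h) * complex_of_real t) - exp (\<i> * z * complex_of_real t)
           - h * (\<i> * complex_of_real t * exp (\<i> * z * complex_of_real t))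
      = exp (\<i> * z * complex_of_real t) * (exp w - 1 - w)"
    unfolding w_def by (simp add: algebra_simps)
  have "norm (exp (\<i> * z * complex_of_real t) * (exp w - 1 - w))
      = exp (- Im z * t) * norm (exp w - 1 - w)" by (simp add: norm_mult)
  also have "\<dots> \<le> exp (- Im z * t) * (12 * (norm h * t)^2 * exp (norm h * t))"
    using exp_quad12[of w] nw by (intro mult_left_mono) auto
  also have "\<dots> \<le> exp (- Im z * t) * (12 * (norm h * t)^2 * exp (Im z * t / 2))"
  proof -
    have "norm h * t \<le> Im z / 2 * t" using h t by (rule mult_right_mono)
    then show ?thesis by (intro mult_left_mono) auto
  qed
  also have "\<dots> = 12 * (norm h)^2 * (t^2 * exp (- Im z * t / 2))"
    by (simp add: power_mult_distrib mult_ac flip: exp_add)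
  also have "\<dots> \<le> 12 * (norm h)^2 * (8 / (Im z)^2)"
    using t2_exp_bound[OF y t] by (intro mult_left_mono) auto
  also have "\<dots> = 96 / (Im z)^2 * (norm h)^2" by simp
  finally have fin: "norm (exp (\<i> * z * complex_of_real t) * (exp w - 1 - w)) \<le> 96 / (Im z)^2 * (norm h)^2" .
  show ?thesis by (subst eq) (rule fin)
qed

lemma integrable_D:
  assumes "Im z > 0"
  shows "integrable M (\<lambda>x. \<i> * complex_of_real (T x) * exp (\<i> * z * complex_of_real (T x)))"
proof (rule integrable_const_bound[where B="1 / Im z"])
  show "AE x in M. norm (\<i> * complex_of_real (T x) * exp (\<i> * z * complex_of_real (T x))) \<le> 1 / Im z"
  proof (rule AE_I2)
    fix x assume "x \<in> space M"
    then have "T x \<ge> 0" using Tpos[of x] by simp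
    then show "norm (\<i> * complex_of_real (T x) * exp (\<i> * z * complex_of_real (T x))) \<le> 1 / Im z"
      using t_exp_bound[OF assms, of "T x"] by (simp add: norm_mult)
  qed
next
  show "(\<lambda>x. \<i> * complex_of_real (T x) * exp (\<i> * z * complex_of_real (T x))) \<in> borel_measurable M"
    using Tm meas_exp_izt[OF Tm] by (intro borel_measurable_times) auto
qed

lemma FT_quad:
  assumes y: "Im z > 0" and h: "norm h \<le> Im z / 2"
  shows "norm (FT M T (z + h) - FT M T z - h * (CLINT x|M. \<i> * complex_of_real (T x) * exp (\<i> * z * complex_of_real (T x))))
     \<le> 96 / (Im z)^2 * (norm h)^2"
proof -
  have zh: "Im (z + h) \<ge> 0"
  proof -
    have "\<bar>Im h\<bar> \<le> norm h" by (rule abs_Im_le_cmod)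
    then show ?thesis using h y unfolding plus_complex.sel by linarith
  qed
  let ?f = "\<lambda>x. exp (\<i> * (z + h) * complex_of_real (T x))"
  let ?g = "\<lambda>x. exp (\<i> * z * complex_of_real (T x))"
  let ?d = "\<lambda>x. \<i> * complex_of_real (T x) * exp (\<i> * z * complex_of_real (T x))"
  have i1: "integrable M ?f" by (rule integrable_exp_izt[OF zh])
  have i2: "integrable M ?g" using y by (intro integrable_exp_izt) linarith
  have i3: "integrable M (\<lambda>x. h * ?d x)" by (rule integrable_mult_right[OF integrable_D[OF y]])
  have eqI: "FT M T (z + h) - FT M T z - h * (CLINT x|M. ?d x) = (CLINT x|M. ?f x - ?g x - h * ?d x)"
  proof -
    have "(CLINT x|M. ?f x - ?g x - h * ?d x) = (CLINT x|M. ?f x - ?g x) - (CLINT x|M. h * ?d x)"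
      by (rule Bochner_Integration.integral_diff[OF Bochner_Integration.integrable_diff[OF i1 i2] i3])
    also have "\<dots> = (CLINT x|M. ?f x) - (CLINT x|M. ?g x) - h * (CLINT x|M. ?d x)"
      by (simp only: Bochner_Integration.integral_diff[OF i1 i2] integral_mult_right_zero)
    finally show ?thesis unfolding FT_def by (rule sym)
  qed
  have "norm (CLINT x|M. ?f x - ?g x - h * ?d x) \<le> (\<integral>x. norm (?f x - ?g x - h * ?d x) \<partial>M)"
    by (rule integral_norm_bound)
  also have "\<dots> \<le> (\<integral>x. 96 / (Im z)^2 * (norm h)^2 \<partial>M)"
  proof (rule integral_mono_AE)
    show "integrable M (\<lambda>x. norm (?f x - ?g x - h * ?d x))"
      by (rule integrable_norm[OF Bochner_Integration.integrable_diff[OF Bochner_Integration.integrable_diff[OF i1 i2] i3]])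
    show "AE x in M. norm (?f x - ?g x - h * ?d x) \<le> 96 / (Im z)^2 * (norm h)^2"
    proof (rule AE_I2)
      fix x assume "x \<in> space M"
      then have "T x \<ge> 0" using Tpos[of x] by simp
      then show "norm (?f x - ?g x - h * ?d x) \<le> 96 / (Im z)^2 * (norm h)^2"
        by (rule pointwise_quad[OF y _ h])
    qed
  qed simp
  also have "\<dots> = 96 / (Im z)^2 * (norm h)^2" by (simp add: prob_space)
  finally show ?thesis unfolding eqI .
qed

lemma FT_deriv:
  assumes y: "Im z > 0"
  shows "(FT M T has_field_derivative (CLINT x|M. \<i> * complex_of_real (T x) * exp (\<i> * z * complex_of_real (T x)))) (at z)"
proof -
  define D where "D = (CLINT x|M. \<i> * complex_of_real (T x) * exp (\<i> * z * complex_of_real (T x)))"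
  define C where "C = 96 / (Im z)^2"
  have C0: "C \<ge> 0" unfolding C_def by simp
  have ev0: "eventually (\<lambda>w. w \<noteq> z \<and> dist w z < Im z / 2) (at z)"
    unfolding eventually_at
  proof (intro exI conjI ballI impI)
    show "Im z / 2 > 0" using y by simp
  qed auto
  have ev: "eventually (\<lambda>w. norm ((FT M T w - FT M T z) / (w - z) - D) \<le> C * norm (w - z)) (at z)"
    using ev0
  proof eventually_elim
    case (elim w)
    have nh1: "norm (w - z) \<le> Im z / 2" using elim by (simp add: dist_norm)
    have nh2: "w - z \<noteq> 0" using elim by simp
    have q: "norm (FT M T (z + (w - z)) - FT M T z - (w - z) * D) \<le> C * (norm (w - z))^2"
      unfolding C_def D_def by (rule FT_quad[OF y nh1])
    have e1: "(FT M T w - FT M T z) / (w - z) - D = (FT M T (z + (w - z)) - FT M T z - (w - z) * D) / (w - z)"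
      using nh2 by (simp add: diff_divide_distrib)
    have "norm ((FT M T (z + (w - z)) - FT M T z - (w - z) * D) / (w - z))
        = norm (FT M T (z + (w - z)) - FT M T z - (w - z) * D) / norm (w - z)"
      by (rule norm_divide)
    also have "\<dots> \<le> C * (norm (w - z))^2 / norm (w - z)"
      by (rule divide_right_mono[OF q]) simp
    also have "\<dots> = C * norm (w - z)"
      using nh2 by (simp add: power2_eq_square)
    finally show ?case unfolding e1 .
  qed
  have "((\<lambda>w. C * norm (w - z)) \<longlongrightarrow> C * norm (z - z)) (at z)"
    by (intro tendsto_intros)
  then have "((\<lambda>w. C * norm (w - z)) \<longlongrightarrow> 0) (at z)" by simp
  then have "((\<lambda>w. (FT M T w - FT M T z) / (w - z) - D) \<longlongrightarrow> 0) (at z)"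
    by (rule Lim_null_comparison[OF ev])
  then have "((\<lambda>w. (FT M T w - FT M T z) / (w - z)) \<longlongrightarrow> D) (at z)"
    by (simp only: Lim_null[symmetric])
  then show ?thesis unfolding D_def by (simp only: has_field_derivative_iff)
qed

lemma FT_holo: "FT M T holomorphic_on {z. Im z > 0}"
proof (subst holomorphic_on_open[OF open_halfspace_Im_gt], intro ballI)
  fix z :: complex assume "z \<in> {z. Im z > 0}"
  then have "Im z > 0" by simp
  from FT_deriv[OF this] show "\<exists>f'. (FT M T has_field_derivative f') (at z)" by (rule exI)
qed

end



lemma Im_Ln_mono_Re:
  assumes "Re w1 = Re w2" "Re w2 \<ge> 0" "Im w2 \<le> Im w1" "w1 \<noteq> 0" "w2 \<noteq> 0"
  shows "Im (Ln w2) \<le> Im (Ln w1)"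
proof (cases "Re w2 = 0")
  case False
  then have "Re w2 > 0" using assms by simp
  moreover have "Im w2 / Re w2 \<le> Im w1 / Re w1" using assms \<open>Re w2 > 0\<close> by (simp add: divide_right_mono)
  ultimately show ?thesis using assms Im_Ln_eq[OF assms(4)] Im_Ln_eq[OF assms(5)]
    by (simp add: arctan_monotone')
next
  case True
  then have r1: "Re w1 = 0" using assms by simp
  have i2: "Im w2 \<noteq> 0" using True assms(5) complex_eq_iff by auto
  have i1: "Im w1 \<noteq> 0" using r1 assms(4) complex_eq_iff by auto
  show ?thesis using Im_Ln_eq[OF assms(4)] Im_Ln_eq[OF assms(5)] True r1 i1 i2 assms(3)
    by auto
qed

lemma Im_Ln_abs_le:
  assumes "Re w \<ge> 0" "w \<noteq> 0"
  shows "\<bar>Im (Ln w)\<bar> \<le> pi / 2"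
  using Re_Ln_pos_le[OF assms(2)] assms(1) by simp

lemma not_nonpos_shift:
  fixes z :: complex and a :: real
  assumes "Im z \<ge> 0" "z \<noteq> of_real a"
  shows "- \<i> * (z - of_real a) \<notin> \<real>\<^sub>\<le>\<^sub>0"
proof
  assume "- \<i> * (z - of_real a) \<in> \<real>\<^sub>\<le>\<^sub>0"
  then have "Im z \<le> 0" "Re z = a" by (auto simp: complex_nonpos_Reals_iff)
  then have "z = of_real a" using assms(1) by (simp add: complex_eq_iff)
  then show False using assms(2) by simp
qed

definition phiA :: "real \<Rightarrow> complex \<Rightarrow> real" where
  "phiA D z = Im (Ln (- \<i> * (z - of_real D))) - Im (Ln (- \<i> * (z + of_real D)))"

lemma phiA_bounds:
  assumes D: "D > 0" and z: "Im z \<ge> 0" "z \<noteq> of_real D" "z \<noteq> - of_real D"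
  shows "0 \<le> phiA D z" "phiA D z \<le> pi"
proof -
  define w1 where "w1 = - \<i> * (z - of_real D)"
  define w2 where "w2 = - \<i> * (z + of_real D)"
  have w1: "w1 \<noteq> 0" using z unfolding w1_def by auto
  have w2: "w2 \<noteq> 0" using z unfolding w2_def by (auto simp: add_eq_0_iff)
  have re: "Re w1 = Re w2" "Re w2 \<ge> 0" "Im w2 \<le> Im w1" using z D unfolding w1_def w2_def by auto
  have "Im (Ln w2) \<le> Im (Ln w1)" by (rule Im_Ln_mono_Re[OF re w1 w2])
  then show "0 \<le> phiA D z" unfolding phiA_def w1_def[symmetric] w2_def[symmetric] by simp
  have "\<bar>Im (Ln w1)\<bar> \<le> pi / 2" by (rule Im_Ln_abs_le) (use re w1 in auto)
  moreover have "\<bar>Im (Ln w2)\<bar> \<le> pi / 2" by (rule Im_Ln_abs_le) (use re w2 in auto)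
  ultimately show "phiA D z \<le> pi" unfolding phiA_def w1_def[symmetric] w2_def[symmetric] by linarith
qed

lemma phiA_inside:
  assumes D: "D > 0" and x: "\<bar>x\<bar> < D"
  shows "phiA D (of_real x) = pi"
proof -
  have a: "- \<i> * (complex_of_real x - of_real D) \<noteq> 0" using x by auto
  have b: "- \<i> * (complex_of_real x + of_real D) \<noteq> 0" using x by (auto simp: complex_eq_iff)
  have "Im (Ln (- \<i> * (complex_of_real x - of_real D))) = pi / 2"
    using Im_Ln_eq_pi_half(1)[OF a] x by auto
  moreover have "Im (Ln (- \<i> * (complex_of_real x + of_real D))) = - pi / 2"
    using Im_Ln_eq_pi_half(2)[OF b] x by auto
  ultimately show ?thesis unfolding phiA_def by simp
qed

lemma phiA_iy:
  assumes D: "D > 0" and y: "y > 0"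
  shows "phiA D (\<i> * of_real y) = pi - 2 * arctan (y / D)"
proof -
  have a: "- \<i> * (\<i> * of_real y - of_real D) \<noteq> 0" using y by (auto simp: complex_eq_iff)
  have b: "- \<i> * (\<i> * of_real y + of_real D) \<noteq> 0" using y by (auto simp: complex_eq_iff)
  have "Im (Ln (- \<i> * (\<i> * of_real y - of_real D))) = arctan (D / y)"
    using Im_Ln_eq[OF a] y by simp
  moreover have "Im (Ln (- \<i> * (\<i> * of_real y + of_real D))) = arctan (- D / y)"
    using Im_Ln_eq[OF b] y by simp
  moreover have "arctan (D / y) = pi/2 - arctan (y / D)"
    using arctan_inverse[of "y / D"] D y by (simp add: inverse_eq_divide)
  ultimately show ?thesis unfolding phiA_def by (simp add: arctan_minus)
qed

lemma cont_nbhd: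
  assumes "continuous_on S f" "a \<in> S" "norm (f a) < s"
  shows "\<exists>r>0. \<forall>z\<in>S. norm (z - a) < r \<longrightarrow> norm (f z) < (s::real)"
proof -
  obtain d where d: "d > 0" "\<forall>x'\<in>S. dist x' a < d \<longrightarrow> dist (f x') (f a) < s - norm (f a)"
    using assms(1) assms(2) assms(3) unfolding continuous_on_iff by (metis diff_gt_0_iff_gt)
  show ?thesis
  proof (intro exI conjI ballI impI)
    fix z assume "z \<in> S" "norm (z - a) < d"
    then have "dist (f z) (f a) < s - norm (f a)" using d by (simp add: dist_norm)
    moreover have "norm (f z) \<le> norm (f a) + dist (f z) (f a)"
      by (metis dist_norm norm_triangle_sub add.commute)
    ultimately show "norm (f z) < s" by linarith
  qed (rule d(1))
qed

lemma norm_G: "norm (a * exp b / d) = norm a * exp (Re b) / norm (d::complex)"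
  by (simp add: norm_mult norm_divide)

lemma not_nonpos_shift':
  fixes z :: complex and a :: real
  assumes "Im z \<ge> 0" "z \<noteq> - of_real a"
  shows "- \<i> * (z + of_real a) \<notin> \<real>\<^sub>\<le>\<^sub>0"
  using not_nonpos_shift[of z "- a"] assms by simp

context FTsetup
begin

lemma key_delta:
  assumes D: "D > 0" and s: "0 < s" "s < 1"
    and hS: "\<And>\<omega>. \<bar>\<omega>\<bar> \<ge> D \<Longrightarrow> norm (FT M T (of_real \<omega>)) < s"
    and y: "y > 0" and \<delta>: "\<delta> > 0"
  shows "norm (FT M T (\<i> * of_real y)) \<le> exp (ln s * (1 - phiA D (\<i> * of_real y) / pi)) * (1 + \<delta> * y)"
proof -
  define c where "c = ln s"
  have c: "c < 0" unfolding c_def using s by simp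
  define Hf where "Hf z = complex_of_real c * (1 + \<i> * complex_of_real (1/pi) * (Ln (- \<i> * (z - of_real D)) - Ln (- \<i> * (z + of_real D))))" for z
  define G where "G z = FT M T z * exp (- Hf z) / (1 - \<i> * of_real \<delta> * z)" for z
  have ReH: "Re (Hf z) = c * (1 - phiA D z / pi)" for z
    unfolding Hf_def phiA_def by (simp add: algebra_simps diff_divide_distrib add_divide_distrib)
  have expH: "exp (Re (- Hf z)) \<le> 1 / s" if "Im z \<ge> 0" "z \<noteq> of_real D" "z \<noteq> - of_real D" for z
  proof -
    have "0 \<le> phiA D z" by (rule phiA_bounds(1)[OF D that])
    then have "c * phiA D z / pi \<le> 0" using c by (intro divide_nonpos_pos mult_nonpos_nonneg) auto
    then have "c \<le> Re (Hf z)" unfolding ReH by (simp add: algebra_simps diff_divide_distrib)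
    then have "exp (Re (- Hf z)) \<le> exp (- c)" by simp
    also have "\<dots> = 1 / s" unfolding c_def using s by (simp add: exp_minus inverse_eq_divide)
    finally show ?thesis .
  qed
  have den: "norm (1 - \<i> * of_real \<delta> * z) \<ge> 1" if "Im z \<ge> 0" for z
  proof -
    have "1 \<le> Re (1 - \<i> * of_real \<delta> * z)" using that \<delta> by simp
    also have "\<dots> \<le> norm (1 - \<i> * of_real \<delta> * z)" by (rule complex_Re_le_cmod)
    finally show ?thesis .
  qed
  have den2: "norm (1 - \<i> * of_real \<delta> * z) \<ge> \<delta> * norm z - 1" for z
  proof -
    have "norm (\<i> * of_real \<delta> * z) = norm (1 - (1 - \<i> * of_real \<delta> * z))" by simp
    also have "\<dots> \<le> norm (1::complex) + norm (1 - \<i> * of_real \<delta> * z)" by (rule norm_triangle_ineq4)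
    finally have "norm (\<i> * of_real \<delta> * z) \<le> norm (1 - \<i> * of_real \<delta> * z) + norm (1::complex)" by simp
    then show ?thesis using \<delta> by (simp add: norm_mult)
  qed
  obtain r1 where r1: "r1 > 0" "\<And>z. Im z \<ge> 0 \<Longrightarrow> norm (z - of_real D) < r1 \<Longrightarrow> norm (FT M T z) < s"
    using cont_nbhd[OF FT_cont, of "of_real D" s] hS[of D] D by auto
  obtain r2 where r2: "r2 > 0" "\<And>z. Im z \<ge> 0 \<Longrightarrow> norm (z - of_real (-D)) < r2 \<Longrightarrow> norm (FT M T z) < s"
    using cont_nbhd[OF FT_cont, of "of_real (-D)" s] hS[of "-D"] D by auto
  define r where "r = min (min r1 r2) D / 2"
  have r: "r > 0" "r < r1" "r < r2" "r < D" unfolding r_def using r1 r2 D by auto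
  define R where "R = y + 1 + (1 + 1 / s) / \<delta>"
  have R1: "R > y" unfolding R_def using \<delta> s by (simp add: add_pos_pos)
  have "\<delta> * R - 1 = \<delta> * (y + 1) + 1 / s" 
  proof -
    have e: "\<delta> * ((1 + 1 / s) / \<delta>) = 1 + 1 / s" using \<delta> by simp
    show ?thesis unfolding R_def distrib_left e by simp
  qed
  then have R2: "\<delta> * R - 1 \<ge> 1 / s" using \<delta> y by simp
  note R = R1 R2
  define K where "K = {z. 0 \<le> Im z \<and> norm z \<le> R \<and> r \<le> norm (z - of_real D) \<and> r \<le> norm (z + of_real D)}"
  define Dm where "Dm = {z. 0 < Im z \<and> norm z < R \<and> r < norm (z - of_real D) \<and> r < norm (z + of_real D)}"
  have openD: "open Dm" unfolding Dm_def
    by (intro open_Collect_conj open_Collect_less continuous_intros)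
  have closedK: "closed K" unfolding K_def
    by (intro closed_Collect_conj closed_Collect_le continuous_intros)
  have DK: "Dm \<subseteq> K" unfolding Dm_def K_def by auto
  have clD: "closure Dm \<subseteq> K" by (rule closure_minimal[OF DK closedK])
  have Kne: "z \<noteq> of_real D" "z \<noteq> - of_real D" "Im z \<ge> 0" if "z \<in> K" for z
    using that r unfolding K_def by auto
  have denne: "1 - \<i> * of_real \<delta> * z \<noteq> 0" if "Im z \<ge> 0" for z
    using den[OF that] by auto
  have contK: "continuous_on K G"
    unfolding G_def Hf_def
    by (intro continuous_intros continuous_on_subset[OF FT_cont])
       (use Kne not_nonpos_shift not_nonpos_shift' denne in \<open>auto\<close>)
  have holoD: "G holomorphic_on Dm"
    unfolding G_def Hf_def
    by (intro holomorphic_intros holomorphic_on_subset[OF FT_holo])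
       (use Kne DK not_nonpos_shift not_nonpos_shift' denne in \<open>auto simp: Dm_def\<close>)
  have bnd: "norm (G z) \<le> 1" if zK: "z \<in> K" and zD: "z \<notin> Dm" for z
  proof -
    have z0: "Im z \<ge> 0" and zne: "z \<noteq> of_real D" "z \<noteq> - of_real D" using Kne[OF zK] by auto
    have nG: "norm (G z) = norm (FT M T z) * exp (Re (- Hf z)) / norm (1 - \<i> * of_real \<delta> * z)"
      unfolding G_def by (rule norm_G)
    have eH: "exp (Re (- Hf z)) \<le> 1 / s" by (rule expH[OF z0 zne])
    have dn: "norm (1 - \<i> * of_real \<delta> * z) \<ge> 1" by (rule den[OF z0])
    have gen: "norm (G z) \<le> 1" if "norm (FT M T z) \<le> s"
    proof -
      have "norm (FT M T z) * exp (Re (- Hf z)) \<le> s * (1 / s)"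
        by (intro mult_mono that eH) (use s in auto)
      also have "\<dots> = 1" using s by simp
      finally have "norm (FT M T z) * exp (Re (- Hf z)) \<le> 1" .
      then show ?thesis unfolding nG using dn
        by (smt (verit) divide_le_eq_1 norm_ge_zero exp_gt_zero mult_nonneg_nonneg)
    qed
    show ?thesis
    proof (cases "norm (z - of_real D) < r1 \<or> norm (z - of_real (-D)) < r2")
      case True
      then show ?thesis using r1 r2 z0 gen by (meson less_imp_le)
    next
      case False
      then have far: "r < norm (z - of_real D)" "r < norm (z + of_real D)" using r by auto
      show ?thesis
      proof (cases "Im z = 0")
        case True
        then have zx: "z = of_real (Re z)" by (simp add: complex_eq_iff)
        show ?thesis
        proof (cases "\<bar>Re z\<bar> \<ge> D")
          case True
          then show ?thesis using hS[OF True] zx gen by (metis less_imp_le)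
        next
          case False
          then have "phiA D z = pi" using phiA_inside[OF D, of "Re z"] zx by simp
          then have "Re (Hf z) = 0" unfolding ReH by simp
          then have "norm (G z) = norm (FT M T z) / norm (1 - \<i> * of_real \<delta> * z)" unfolding nG by simp
          also have "\<dots> \<le> 1" using FT_le1[OF z0] dn
            by (smt (verit) divide_le_eq_1 norm_ge_zero)
          finally show ?thesis .
        qed
      next
        case False
        then have "Im z > 0" using z0 by simp
        then have "norm z \<ge> R" using zD far unfolding Dm_def by auto
        then have dR: "norm (1 - \<i> * of_real \<delta> * z) \<ge> 1 / s"
          using den2[of z] R \<delta> by (smt (verit) mult_left_mono)
        have "norm (FT M T z) * exp (Re (- Hf z)) \<le> 1 * (1 / s)"
          by (intro mult_mono FT_le1[OF z0] eH) auto
        then show ?thesis unfolding nG using dR s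
          by (smt (verit) divide_le_eq_1 norm_ge_zero exp_gt_zero mult_nonneg_nonneg)
      qed
    qed
  qed
  have iyD: "\<i> * of_real y \<in> Dm"
  proof -
    have "D \<le> norm (\<i> * of_real y - of_real D)"
      using abs_Re_le_cmod[of "\<i> * of_real y - of_real D"] D by simp
    moreover have "D \<le> norm (\<i> * of_real y + of_real D)"
      using abs_Re_le_cmod[of "\<i> * of_real y + of_real D"] D by simp
    ultimately show ?thesis unfolding Dm_def using y R r by (auto simp: norm_mult)
  qed
  have Gle: "norm (G (\<i> * of_real y)) \<le> 1"
  proof (rule maximum_modulus_frontier[where S = Dm and f = G and \<xi> = "\<i> * of_real y"])
    show "G holomorphic_on interior Dm" using holoD interior_open[OF openD] by simp
    show "continuous_on (closure Dm) G" by (rule continuous_on_subset[OF contK clD])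
    show "bounded Dm" unfolding Dm_def by (rule bounded_subset[OF bounded_cball[of 0 R]]) auto
    show "\<And>z. z \<in> frontier Dm \<Longrightarrow> norm (G z) \<le> 1"
      using bnd clD interior_open[OF openD] unfolding frontier_def by blast
  qed (rule iyD)
  have Geq: "norm (G (\<i> * of_real y)) = norm (FT M T (\<i> * of_real y)) * exp (Re (- Hf (\<i> * of_real y))) / (1 + \<delta> * y)"
  proof -
    have e: "1 - \<i> * complex_of_real \<delta> * (\<i> * complex_of_real y) = complex_of_real (1 + \<delta> * y)"
      by (simp add: algebra_simps)
    have n: "norm (1 - \<i> * complex_of_real \<delta> * (\<i> * complex_of_real y)) = 1 + \<delta> * y"
      unfolding e norm_of_real using \<delta> y by simp
    show ?thesis by (simp only: G_def norm_G n)
  qed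
  have "norm (FT M T (\<i> * of_real y)) * exp (Re (- Hf (\<i> * of_real y))) \<le> 1 + \<delta> * y"
  proof -
    have pos: "0 < 1 + \<delta> * y" using \<delta> y by (simp add: add_pos_nonneg)
    show ?thesis using Gle pos unfolding Geq by (simp add: divide_le_eq)
  qed
  then have "norm (FT M T (\<i> * of_real y)) \<le> (1 + \<delta> * y) / exp (Re (- Hf (\<i> * of_real y)))"
    by (simp add: le_divide_eq)
  also have "\<dots> = exp (Re (Hf (\<i> * of_real y))) * (1 + \<delta> * y)"
    by (simp add: exp_minus field_simps)
  finally show ?thesis unfolding ReH c_def .
qed

end



context FTsetup
begin

lemma key:
  assumes D: "D > 0" and s: "0 < s" "s < 1"
    and hS: "\<And>\<omega>. \<bar>\<omega>\<bar> \<ge> D \<Longrightarrow> norm (FT M T (of_real \<omega>)) < s"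
    and y: "y > 0"
  shows "norm (FT M T (\<i> * of_real y)) \<le> exp (ln s * (2 * arctan (y / D) / pi))"
proof -
  define B where "B = exp (ln s * (1 - phiA D (\<i> * of_real y) / pi))"
  have B0: "B > 0" unfolding B_def by simp
  have "norm (FT M T (\<i> * of_real y)) \<le> B"
  proof (rule field_le_epsilon)
    fix e :: real assume e: "0 < e"
    have "norm (FT M T (\<i> * of_real y)) \<le> B * (1 + (e / (B * y)) * y)"
      unfolding B_def by (rule key_delta[OF D s hS y]) (use e B0 y in auto)
    also have "\<dots> = B + e" using B0 y by (simp add: field_simps)
    finally show "norm (FT M T (\<i> * of_real y)) \<le> B + e" .
  qed
  also have "B = exp (ln s * (2 * arctan (y / D) / pi))"
    unfolding B_def phiA_iy[OF D y] by (simp add: field_simps)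
  finally show ?thesis .
qed

lemma FT_iy:
  "FT M T (\<i> * of_real y) = complex_of_real (LINT x|M. exp (- y * T x))"
proof -
  have "\<And>x. exp (\<i> * (\<i> * complex_of_real y) * complex_of_real (T x)) = complex_of_real (exp (- y * T x))"
    by (simp add: exp_of_real[symmetric])
  then show ?thesis unfolding FT_def by simp
qed

lemma FT_real: "FT M T (of_real \<omega>) = (CLINT x|M. iexp (\<omega> * T x))"
  unfolding FT_def by (simp add: mult.assoc)

lemma lower:
  assumes intT: "integrable M T" and y: "y \<ge> 0"
  shows "1 - y * (LINT x|M. T x) \<le> (LINT x|M. exp (- y * T x))"
proof -
  have "(LINT x|M. 1 - y * T x) \<le> (LINT x|M. exp (- y * T x))"
  proof (rule integral_mono)
    show "integrable M (\<lambda>x. 1 - y * T x)" using intT by simp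
    show "integrable M (\<lambda>x. exp (- y * T x))"
    proof (rule integrable_const_bound[where B=1])
      show "AE x in M. norm (exp (- y * T x)) \<le> 1"
      proof (rule AE_I2)
        fix x assume "x \<in> space M"
        then have "T x > 0" by (rule Tpos)
        then show "norm (exp (- y * T x)) \<le> 1" using y by (simp add: mult_nonneg_nonneg)
      qed
    qed (use Tm in measurable)
    show "1 - y * T x \<le> exp (- y * T x)" for x
      using exp_ge_add_one_self[of "- y * T x"] by simp
  qed
  also have "(LINT x|M. 1 - y * T x) = 1 - y * (LINT x|M. T x)"
    using intT by (simp add: prob_space)
  finally show ?thesis by simp
qed

end

lemma final_ineq:
  assumes D: "D > 0" and mu: "mu \<ge> 0" and s: "0 < s" "s < 1"
    and H: "\<And>y. 0 < y \<Longrightarrow> y * mu \<le> 1/2 \<Longrightarrow> 1 - y * mu \<le> exp (ln s * (2 * arctan (y / D) / pi))"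
  shows "exp (- D * mu * pi / 2) \<le> s"
proof -
  define f where "f y = - mu - 2 * y * mu^2" for y :: real
  define g where "g y = ln s * (2 / pi) / (D * sqrt (1 + (y / D)^2))" for y :: real
  have lns: "ln s < 0" using s by simp
  have fg: "f y \<le> g y" if y: "0 < y" "y * mu \<le> 1/2" for y
  proof -
    have pos: "0 < 1 - y * mu" using y by simp
    have "ln (1 - y * mu) \<le> ln (exp (ln s * (2 * arctan (y / D) / pi)))"
      using H[OF y] pos by (subst ln_le_cancel_iff) auto
    then have l1: "ln (1 - y * mu) \<le> ln s * (2 * arctan (y / D) / pi)" by simp
    have l2: "- (y * mu) - 2 * (y * mu)^2 \<le> ln (1 - y * mu)"
      by (rule ln_one_minus_pos_lower_bound) (use y mu in auto)
    have "sin (arctan (y / D)) \<le> arctan (y / D)"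
      by (rule sin_x_le_x) (use y D in simp)
    then have a1: "(y / D) / sqrt (1 + (y / D)^2) \<le> arctan (y / D)" by (simp add: sin_arctan)
    have "ln s * (2 * arctan (y / D) / pi) \<le> ln s * (2 * ((y / D) / sqrt (1 + (y / D)^2)) / pi)"
      using a1 lns by (intro mult_left_mono_neg divide_right_mono mult_left_mono) auto
    also have "\<dots> = y * g y" unfolding g_def by (simp add: field_simps)
    finally have "- (y * mu) - 2 * (y * mu)^2 \<le> y * g y" using l1 l2 by linarith
    moreover have "- (y * mu) - 2 * (y * mu)^2 = y * f y" unfolding f_def by (simp add: power2_eq_square algebra_simps)
    ultimately show ?thesis using y by simp
  qed
  have ev: "eventually (\<lambda>y. f y \<le> g y) (at_right 0)"
    unfolding eventually_at_right_field
  proof (intro exI conjI allI impI)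
    show "(0::real) < 1 / (2 * mu + 1)" using mu by simp
    fix y :: real assume y: "0 < y" "y < 1 / (2 * mu + 1)"
    have "y * (2 * mu + 1) < 1" using y mu by (simp add: field_simps)
    then have "y * mu \<le> 1/2" using y by (simp add: algebra_simps)
    then show "f y \<le> g y" using fg y by simp
  qed
  have lf: "(f \<longlongrightarrow> f 0) (at_right 0)" unfolding f_def by (intro tendsto_intros)
  have lg: "(g \<longlongrightarrow> g 0) (at_right 0)" unfolding g_def using D
    by (intro tendsto_intros) auto
  have "f 0 \<le> g 0" by (rule tendsto_le[OF trivial_limit_at_right_real lg lf ev])
  then have "- mu \<le> ln s * (2 / pi) / D" unfolding f_def g_def by simp
  then have "- mu * D \<le> ln s * (2 / pi)" using D by (simp add: field_simps)
  then have "- D * mu * pi / 2 \<le> ln s" using pi_gt_zero by (simp add: field_simps)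
  then have "exp (- D * mu * pi / 2) \<le> exp (ln s)" by simp
  then show ?thesis using s by simp
qed

theorem theorem3:
  fixes M :: "'a measure" and T :: "'a \<Rightarrow> real" and \<Delta> :: real
  assumes "prob_space M"
    and "T \<in> borel_measurable M"
    and "\<And>x. x \<in> space M \<Longrightarrow> T x > 0"
    and "\<Delta> > 0"
  shows "(SUP \<omega>\<in>{\<omega>. \<bar>\<omega>\<bar> \<ge> \<Delta>}. cmod (CLINT x|M. iexp (\<omega> * T x)))
           \<ge> (if (\<integral>\<^sup>+ x. ennreal (T x) \<partial>M) = \<infinity> then 0
              else exp (- \<Delta> * enn2real (\<integral>\<^sup>+ x. ennreal (T x) \<partial>M) * pi / 2))"
proof -
  have loc: "FTsetup M T" unfolding FTsetup_def FTsetup_axioms_def using assms by auto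
  interpret FTsetup M T by (rule loc)
  define A where "A = {\<omega>::real. \<bar>\<omega>\<bar> \<ge> \<Delta>}"
  define Phi where "Phi \<omega> = cmod (CLINT x|M. iexp (\<omega> * T x))" for \<omega>
  define S where "S = (SUP \<omega>\<in>A. Phi \<omega>)"
  have Phi_FT: "Phi \<omega> = norm (FT M T (of_real \<omega>))" for \<omega>
    unfolding Phi_def FT_real ..
  have Phi1: "Phi \<omega> \<le> 1" for \<omega> unfolding Phi_FT by (rule FT_le1) simp
  have bdd: "bdd_above (Phi ` A)" using Phi1 by (intro bdd_aboveI[where M=1]) auto
  have Ane: "A \<noteq> {}" using assms(4) unfolding A_def by (auto intro!: exI[of _ \<Delta>])
  have S_ge: "Phi \<omega> \<le> S" if "\<omega> \<in> A" for \<omega>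
    unfolding S_def by (rule cSUP_upper[OF that bdd])
  have S0: "0 \<le> S"
  proof -
    have "\<Delta> \<in> A" using assms(4) unfolding A_def by simp
    then have "Phi \<Delta> \<le> S" by (rule S_ge)
    moreover have "0 \<le> Phi \<Delta>" unfolding Phi_def by simp
    ultimately show ?thesis by linarith
  qed
  have goal_eq: "?thesis \<longleftrightarrow> (if (\<integral>\<^sup>+ x. ennreal (T x) \<partial>M) = \<infinity> then 0
              else exp (- \<Delta> * enn2real (\<integral>\<^sup>+ x. ennreal (T x) \<partial>M) * pi / 2)) \<le> S"
    unfolding S_def A_def Phi_def by simp
  show ?thesis
  proof (cases "(\<integral>\<^sup>+ x. ennreal (T x) \<partial>M) = \<infinity>")
    case True
    then show ?thesis unfolding goal_eq using S0 by simp
  next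
    case False
    define mu where "mu = enn2real (\<integral>\<^sup>+ x. ennreal (T x) \<partial>M)"
    have AEpos: "AE x in M. 0 \<le> T x" using assms(3) by (intro AE_I2) (simp add: less_imp_le)
    have intT: "integrable M T"
      by (rule integrableI_nonneg[OF assms(2) AEpos]) (use False in \<open>simp add: less_top\<close>)
    have muT: "(LINT x|M. T x) = mu"
      unfolding mu_def by (rule integral_eq_nn_integral[OF assms(2) AEpos])
    have mu0: "mu \<ge> 0" unfolding mu_def by simp
    define E where "E = exp (- \<Delta> * mu * pi / 2)"
    have E1: "E \<le> 1" unfolding E_def using mu0 assms(4)
      by (simp add: mult_nonneg_nonneg)
    have "E \<le> S"
    proof (rule ccontr)
      assume "\<not> E \<le> S"
      then have SE: "S < E" by simp
      define s where "s = (S + E) / 2"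
      have s: "0 < s" "s < 1" "S < s" "s < E" unfolding s_def using SE S0 E1 by auto
      have hS: "norm (FT M T (of_real \<omega>)) < s" if "\<bar>\<omega>\<bar> \<ge> \<Delta>" for \<omega>
        using S_ge[of \<omega>] that s unfolding A_def Phi_FT by auto
      have H: "1 - y * mu \<le> exp (ln s * (2 * arctan (y / \<Delta>) / pi))" if y: "0 < y" "y * mu \<le> 1/2" for y
      proof -
        have "1 - y * mu \<le> (LINT x|M. exp (- y * T x))"
          using lower[OF intT, of y] y muT by simp
        also have "\<dots> \<le> norm (FT M T (\<i> * of_real y))"
          unfolding FT_iy norm_of_real by simp
        also have "\<dots> \<le> exp (ln s * (2 * arctan (y / \<Delta>) / pi))"
          by (rule key[OF assms(4) s(1,2) hS y(1)])
        finally show ?thesis .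
      qed
      have "E \<le> s" unfolding E_def by (rule final_ineq[OF assms(4) mu0 s(1,2) H])
      then show False using s by simp
    qed
    then show ?thesis unfolding goal_eq using False mu_def E_def by simp
  qed
qed

end
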